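(* Let $X,Y$ be real Hilbert spaces, let $A\in\mathcal{L}(X,Y)$ be a compact operator with singular system $\{(\sigma_i,u_i,v_i)\}_i$, and let $\alpha>0$. Let $B_\alpha=\sum_i\beta_i^\alpha v_iu_i^*$ with $\beta_i^\alpha=\frac{\sigma_i}{2}+\sqrt{\frac{\sigma_i^2}{4}-\alpha}$ if $\sigma_i\ge 2\sqrt\alpha$ and $\beta_i^\alpha=\sqrt\alpha$ if $\sigma_i<2\sqrt\alpha$, and define $K_\alpha:Y\to X$ by $$K_\alpha(y)=x(B_\alpha,y)=(B_\alpha^*B_\alpha+\alpha I)^{-1}B_\alpha^*y .$$ Then $K_\alpha(y)=\sum_i \frac{F_\alpha(\sigma_i)}{\sigma_i}\langle y,v_i\rangle\,u_i$ for all $y\in Y$, where $$F_\alpha(\sigma)=\begin{cases}1, & \sigma\ge 2\sqrt\alpha,\\ \frac{\sigma}{2\sqrt\alpha}, & \sigma<2\sqrt\alpha,\end{cases}$$ and $(K_\alpha)_{\alpha>0}$ is an order optimal regularization method with filter $F_\alpha$: for every $\nu>0$ there exist constants $\gamma,c_1,c_2,c_3>0$ (independent of $\alpha$) such that for all $\alpha>0$: (1) $\sup_{\sigma>0}|F_\alpha(\sigma)\sigma^{-1}|\le c_1\alpha^{-\gamma}$; (2) $\sup_{\sigma>0}|1-F_\alpha(\sigma)|\sigma^{\nu}<c_2\alpha^{\gamma\nu}$; (3) $|F_\alpha(\sigma)|\le c_3$ for all $\sigma>0$.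
   Context: A singular system of the compact operator $A$ means: $\sigma_i>0$, $\{u_i\}$ orthonormal in $X$, $\{v_i\}$ orthonormal in $Y$, $Au_i=\sigma_i v_i$, $A^*v_i=\sigma_i u_i$, $A=\sum_i\sigma_iv_iu_i^*$. For $v\in Y,u\in X$, $vu^*$ denotes the map $x\mapsto\langle u,x\rangle v$. $x(B,y)$ is the unique minimizer of $\tfrac12\|Bx-y\|^2+\tfrac\alpha2\|x\|^2$. The conditions (1)–(3) are the paper's (standard filter-based) definition of an order optimal regularization filter for source exponent $\nu$. *)

theory Defs
  imports "HOL-Analysis.Analysis"
begin

definition compact_operator :: "('a::real_normed_vector \<Rightarrow> 'b::real_normed_vector) \<Rightarrow> bool" where
  "compact_operator A \<longleftrightarrow> bounded_linear A \<and> compact (closure (A ` ball 0 1))"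

text \<open>Singular system of A indexed by the set I (sigma_i > 0, u, v orthonormal families,
  A u_i = sigma_i v_i, A^* v_i = sigma_i u_i (written as <A x, v_i> = sigma_i <u_i, x> for all x),
  and A = sum_i sigma_i v_i u_i^* (pointwise convergence).\<close>
definition singular_system ::
  "('a::real_inner \<Rightarrow> 'b::real_inner) \<Rightarrow> 'i set \<Rightarrow> ('i \<Rightarrow> real) \<Rightarrow> ('i \<Rightarrow> 'a) \<Rightarrow> ('i \<Rightarrow> 'b) \<Rightarrow> bool" where
  "singular_system A I \<sigma> u v \<longleftrightarrow>
     (\<forall>i\<in>I. \<sigma> i > 0) \<and>
     (\<forall>i\<in>I. \<forall>j\<in>I. inner (u i) (u j) = (if i = j then 1 else 0)) \<and>
     (\<forall>i\<in>I. \<forall>j\<in>I. inner (v i) (v j) = (if i = j then 1 else 0)) \<and>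
     (\<forall>i\<in>I. A (u i) = \<sigma> i *\<^sub>R v i) \<and>
     (\<forall>i\<in>I. \<forall>x. inner (A x) (v i) = \<sigma> i * inner (u i) x) \<and>
     (\<forall>x. ((\<lambda>i. (\<sigma> i * inner (u i) x) *\<^sub>R v i) has_sum A x) I)"

definition beta :: "real \<Rightarrow> real \<Rightarrow> real" where
  "beta \<alpha> s = (if s \<ge> 2 * sqrt \<alpha> then s / 2 + sqrt (s\<^sup>2 / 4 - \<alpha>) else sqrt \<alpha>)"

definition B_op ::
  "'i set \<Rightarrow> ('i \<Rightarrow> real) \<Rightarrow> ('i \<Rightarrow> 'a::real_inner) \<Rightarrow> ('i \<Rightarrow> 'b::real_inner) \<Rightarrow> real \<Rightarrow> 'a \<Rightarrow> 'b" where
  "B_op I \<sigma> u v \<alpha> x = infsum (\<lambda>i. (beta \<alpha> (\<sigma> i) * inner (u i) x) *\<^sub>R v i) I"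

definition tik_min :: "('a::real_normed_vector \<Rightarrow> 'b::real_normed_vector) \<Rightarrow> real \<Rightarrow> 'b \<Rightarrow> 'a" where
  "tik_min B \<alpha> y = (THE x. \<forall>z. (norm (B x - y))\<^sup>2 / 2 + \<alpha> / 2 * (norm x)\<^sup>2
                              \<le> (norm (B z - y))\<^sup>2 / 2 + \<alpha> / 2 * (norm z)\<^sup>2)"

definition K_op ::
  "'i set \<Rightarrow> ('i \<Rightarrow> real) \<Rightarrow> ('i \<Rightarrow> 'a::real_inner) \<Rightarrow> ('i \<Rightarrow> 'b::real_inner) \<Rightarrow> real \<Rightarrow> 'b \<Rightarrow> 'a" where
  "K_op I \<sigma> u v \<alpha> y = tik_min (B_op I \<sigma> u v \<alpha>) \<alpha> y"

definition filt :: "real \<Rightarrow> real \<Rightarrow> real" where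
  "filt \<alpha> s = (if s \<ge> 2 * sqrt \<alpha> then 1 else s / (2 * sqrt \<alpha>))"

end

theory Submission
  imports Defs
begin

definition orthon :: "('i \<Rightarrow> 'a::real_inner) \<Rightarrow> 'i set \<Rightarrow> bool" where
  "orthon e I \<longleftrightarrow> (\<forall>i\<in>I. \<forall>j\<in>I. inner (e i) (e j) = (if i = j then 1 else 0))"

lemma orth_sum_norm:
  assumes "orthon e I" "finite F" "F \<subseteq> I"
  shows "(norm (\<Sum>i\<in>F. a i *\<^sub>R e i))\<^sup>2 = (\<Sum>i\<in>F. (a i)\<^sup>2)"
proof -
  have "(norm (\<Sum>i\<in>F. a i *\<^sub>R e i))\<^sup>2 = (\<Sum>i\<in>F. \<Sum>j\<in>F. a i * (a j * inner (e j) (e i)))"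
    by (simp add: power2_norm_eq_inner inner_sum_left inner_sum_right sum_distrib_left)
  also have "\<dots> = (\<Sum>i\<in>F. \<Sum>j\<in>F. if i = j then a i * a j else 0)"
    using assms unfolding orthon_def by (intro sum.cong refl) (auto simp: subset_iff)
  also have "\<dots> = (\<Sum>i\<in>F. (a i)\<^sup>2)"
    using assms(2) by (simp add: power2_eq_square)
  finally show ?thesis .
qed

lemma bessel_fin:
  assumes "orthon e I" "finite F" "F \<subseteq> I"
  shows "(\<Sum>i\<in>F. (inner (e i) x)\<^sup>2) \<le> (norm x)\<^sup>2"
proof -
  define p where "p = (\<Sum>i\<in>F. inner (e i) x *\<^sub>R e i)"
  have pp: "(norm p)\<^sup>2 = (\<Sum>i\<in>F. (inner (e i) x)\<^sup>2)"
    unfolding p_def by (rule orth_sum_norm[OF assms])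
  have xp: "inner x p = (\<Sum>i\<in>F. (inner (e i) x)\<^sup>2)"
    unfolding p_def by (simp add: inner_sum_right power2_eq_square inner_commute)
  have "0 \<le> (norm (x - p))\<^sup>2" by simp
  also have "\<dots> = (norm x)\<^sup>2 - 2 * inner x p + (norm p)\<^sup>2"
    by (simp add: power2_norm_eq_inner inner_diff_left inner_diff_right inner_commute)
  finally show ?thesis using pp xp by linarith
qed

lemma sq_summable:
  assumes "orthon f I" "\<And>i. i \<in> I \<Longrightarrow> \<bar>c i\<bar> \<le> M"
  shows "(\<lambda>i. (c i * inner (f i) x)\<^sup>2) summable_on I"
proof (rule nonneg_bdd_above_summable_on)
  show "bdd_above (sum (\<lambda>i. (c i * inner (f i) x)\<^sup>2) ` {F. F \<subseteq> I \<and> finite F})"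
  proof (rule bdd_aboveI2)
    fix F assume F: "F \<in> {F. F \<subseteq> I \<and> finite F}"
    have "(\<Sum>i\<in>F. (c i * inner (f i) x)\<^sup>2) \<le> (\<Sum>i\<in>F. M\<^sup>2 * (inner (f i) x)\<^sup>2)"
    proof (rule sum_mono)
      fix i assume "i \<in> F"
      then have "\<bar>c i\<bar> \<le> M" using F assms(2) by auto
      then have "(c i)\<^sup>2 \<le> M\<^sup>2" by (metis abs_le_square_iff abs_of_nonneg abs_ge_zero order_trans)
      then show "(c i * inner (f i) x)\<^sup>2 \<le> M\<^sup>2 * (inner (f i) x)\<^sup>2"
        by (simp add: power_mult_distrib mult_right_mono)
    qed
    also have "\<dots> \<le> M\<^sup>2 * (norm x)\<^sup>2"
      using bessel_fin[OF assms(1), of F x] F by (simp add: sum_distrib_left[symmetric] mult_left_mono)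
    finally show "(\<Sum>i\<in>F. (c i * inner (f i) x)\<^sup>2) \<le> M\<^sup>2 * (norm x)\<^sup>2" .
  qed
qed simp

lemma orth_summable:
  fixes e :: "'i \<Rightarrow> 'a::{real_inner, complete_space}"
  assumes orth: "orthon e I" and sa: "(\<lambda>i. (a i)\<^sup>2) summable_on I"
  shows "(\<lambda>i. a i *\<^sub>R e i) summable_on I"
proof -
  define S where "S = infsum (\<lambda>i. (a i)\<^sup>2) I"
  have "\<exists>P. eventually P (finite_subsets_at_top I) \<and>
          (\<forall>F F'. P F \<and> P F' \<longrightarrow> dist (sum (\<lambda>i. a i *\<^sub>R e i) F) (sum (\<lambda>i. a i *\<^sub>R e i) F') < \<epsilon>)"
    if "\<epsilon> > 0" for \<epsilon>
  proof -
    define d where "d = (\<epsilon>/2)\<^sup>2"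
    have "d > 0" using that by (simp add: d_def)
    obtain F0 where F0: "finite F0" "F0 \<subseteq> I" "dist (sum (\<lambda>i. (a i)\<^sup>2) F0) S \<le> d/2"
      using infsum_finite_approximation[OF sa, of "d/2"] \<open>d > 0\<close> unfolding S_def by auto
    define P where "P F \<longleftrightarrow> finite F \<and> F0 \<subseteq> F \<and> F \<subseteq> I" for F
    have evP: "eventually P (finite_subsets_at_top I)"
      unfolding eventually_finite_subsets_at_top P_def using F0 by blast
    have close: "dist (sum (\<lambda>i. a i *\<^sub>R e i) F) (sum (\<lambda>i. a i *\<^sub>R e i) F0) < \<epsilon>/2" if "P F" for F
    proof -
      have fin: "finite F" "F0 \<subseteq> F" "F \<subseteq> I" using that P_def by auto
      have "dist (sum (\<lambda>i. a i *\<^sub>R e i) F) (sum (\<lambda>i. a i *\<^sub>R e i) F0) = norm (\<Sum>i\<in>F-F0. a i *\<^sub>R e i)"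
        unfolding dist_norm using fin by (subst sum_diff) auto
      moreover have "(norm (\<Sum>i\<in>F-F0. a i *\<^sub>R e i))\<^sup>2 = (\<Sum>i\<in>F-F0. (a i)\<^sup>2)"
        using fin by (intro orth_sum_norm[OF orth]) auto
      moreover have "(\<Sum>i\<in>F-F0. (a i)\<^sup>2) = (\<Sum>i\<in>F. (a i)\<^sup>2) - (\<Sum>i\<in>F0. (a i)\<^sup>2)"
        using fin by (subst sum_diff) auto
      moreover have "(\<Sum>i\<in>F. (a i)\<^sup>2) \<le> S"
        unfolding S_def using fin by (intro finite_sum_le_infsum[OF sa]) auto
      moreover have "S - (\<Sum>i\<in>F0. (a i)\<^sup>2) \<le> d/2" using F0(3) unfolding dist_real_def by linarith
      ultimately have "(norm (\<Sum>i\<in>F-F0. a i *\<^sub>R e i))\<^sup>2 < (\<epsilon>/2)\<^sup>2"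
        using \<open>d>0\<close> unfolding d_def by linarith
      then have "norm (\<Sum>i\<in>F-F0. a i *\<^sub>R e i) < \<epsilon>/2"
        by (rule power_less_imp_less_base[where n=2]) (use \<open>\<epsilon>>0\<close> in auto)
      then show ?thesis using \<open>dist _ _ = _\<close> by simp
    qed
    have "dist (sum (\<lambda>i. a i *\<^sub>R e i) F) (sum (\<lambda>i. a i *\<^sub>R e i) F') < \<epsilon>" if "P F" "P F'" for F F'
      using close[OF that(1)] close[OF that(2)] dist_triangle3[of "sum (\<lambda>i. a i *\<^sub>R e i) F" "sum (\<lambda>i. a i *\<^sub>R e i) F'" "sum (\<lambda>i. a i *\<^sub>R e i) F0"]
      by (simp add: dist_commute)
    then show ?thesis using evP by blast
  qed
  then have "cauchy_filter (filtermap (sum (\<lambda>i. a i *\<^sub>R e i)) (finite_subsets_at_top I))"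
    by (simp add: cauchy_filter_metric_filtermap)
  moreover have "complete (UNIV::'a set)"
    by (meson Cauchy_convergent UNIV_I complete_def convergent_def)
  ultimately obtain L' where "(sum (\<lambda>i. a i *\<^sub>R e i) \<longlongrightarrow> L') (finite_subsets_at_top I)"
    using complete_uniform[where S=UNIV] by (force simp add: filterlim_def)
  then show ?thesis
    using summable_on_def has_sum_def by blast
qed

lemma orth_coef:
  assumes "orthon e I" "((\<lambda>i. a i *\<^sub>R e i) has_sum s) I" "j \<in> I"
  shows "inner (e j) s = a j"
proof -
  have "((\<lambda>i. inner (e j) (a i *\<^sub>R e i)) has_sum inner (e j) s) I"
    by (rule has_sum_bounded_linear[OF bounded_linear_inner_right assms(2)])
  moreover have "((\<lambda>i. inner (e j) (a i *\<^sub>R e i)) has_sum s') I \<longleftrightarrow> ((\<lambda>i. a i) has_sum s') {j}" for s'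
    using assms(1,3) unfolding orthon_def
    by (intro has_sum_cong_neutral) (auto simp: inner_commute)
  ultimately have "((\<lambda>i. a i) has_sum inner (e j) s) {j}" by blast
  moreover have "((\<lambda>i. a i) has_sum a j) {j}" by (rule has_sum_finiteI) auto
  ultimately show ?thesis using has_sum_unique by blast
qed

lemma beta_id:
  assumes "s > 0" "\<alpha> > 0"
  shows "filt \<alpha> s / s * ((beta \<alpha> s)\<^sup>2 + \<alpha>) = beta \<alpha> s"
proof (cases "s \<ge> 2 * sqrt \<alpha>")
  case True
  have "(2 * sqrt \<alpha>)\<^sup>2 \<le> s\<^sup>2" using True assms by (intro power_mono) auto
  then have h: "s\<^sup>2 / 4 - \<alpha> \<ge> 0" using assms by (simp add: power_mult_distrib)
  define r where "r = sqrt (s\<^sup>2 / 4 - \<alpha>)"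
  have r2: "r\<^sup>2 = s\<^sup>2 / 4 - \<alpha>" using h by (simp add: r_def)
  have "(beta \<alpha> s)\<^sup>2 + \<alpha> = s * beta \<alpha> s"
    using True r2 unfolding beta_def r_def[symmetric] by (simp add: power2_eq_square algebra_simps)
  then show ?thesis using True assms by (simp add: filt_def)
next
  case False
  then show ?thesis using assms by (simp add: filt_def beta_def field_simps)
qed

lemma beta_bound:
  assumes "s > 0" "\<alpha> > 0"
  shows "\<bar>beta \<alpha> s\<bar> \<le> s + sqrt \<alpha>"
proof (cases "s \<ge> 2 * sqrt \<alpha>")
  case True
  have "sqrt (s\<^sup>2 / 4 - \<alpha>) \<le> sqrt (s\<^sup>2 / 4)" using assms by simp
  also have "\<dots> = s / 2" using assms by (simp add: real_sqrt_divide)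
  finally have h1: "sqrt (s\<^sup>2 / 4 - \<alpha>) \<le> s / 2" .
  have "(2 * sqrt \<alpha>)\<^sup>2 \<le> s\<^sup>2" using True assms by (intro power_mono) auto
  then have h: "s\<^sup>2 / 4 - \<alpha> \<ge> 0" using assms by (simp add: power_mult_distrib)
  then have "sqrt (s\<^sup>2 / 4 - \<alpha>) \<ge> 0" by simp
  moreover have "sqrt \<alpha> \<ge> 0" using assms by simp
  moreover have "beta \<alpha> s = s/2 + sqrt (s\<^sup>2 / 4 - \<alpha>)" using True by (simp add: beta_def)
  ultimately show ?thesis using assms h1 by linarith
next
  case False
  then show ?thesis using assms by (simp add: beta_def)
qed

lemma c_bound:
  assumes "s > 0" "\<alpha> > 0"
  shows "\<bar>filt \<alpha> s / s\<bar> \<le> 1 / (2 * sqrt \<alpha>)"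
proof (cases "s \<ge> 2 * sqrt \<alpha>")
  case True
  then show ?thesis using assms by (simp add: filt_def frac_le)
next
  case False
  then show ?thesis using assms by (simp add: filt_def)
qed

lemma norm_add_sq:
  fixes p d :: "'a::real_inner"
  shows "(norm (p + d))\<^sup>2 = (norm p)\<^sup>2 + 2 * inner p d + (norm d)\<^sup>2"
  by (simp add: power2_norm_eq_inner inner_add_left inner_add_right inner_commute)

lemma filt_props:
  assumes "\<nu> > 0"
  shows "\<exists>\<gamma>>0. \<exists>c1>0. \<exists>c2>0. \<exists>c3>0. \<forall>\<alpha>>0.
            (\<forall>s>0. \<bar>filt \<alpha> s / s\<bar> \<le> c1 * \<alpha> powr (- \<gamma>))
          \<and> bdd_above ((\<lambda>s. \<bar>1 - filt \<alpha> s\<bar> * s powr \<nu>) ` {0<..})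
          \<and> (SUP s\<in>{0<..}. \<bar>1 - filt \<alpha> s\<bar> * s powr \<nu>) < c2 * \<alpha> powr (\<gamma> * \<nu>)
          \<and> (\<forall>s>0. \<bar>filt \<alpha> s\<bar> \<le> c3)"
proof -
  have main: "(\<forall>s>0. \<bar>filt \<alpha> s / s\<bar> \<le> 1 * \<alpha> powr (- (1/2)))
          \<and> bdd_above ((\<lambda>s. \<bar>1 - filt \<alpha> s\<bar> * s powr \<nu>) ` {0<..})
          \<and> (SUP s\<in>{0<..}. \<bar>1 - filt \<alpha> s\<bar> * s powr \<nu>) < (2 powr \<nu> + 1) * \<alpha> powr (1/2 * \<nu>)
          \<and> (\<forall>s>0. \<bar>filt \<alpha> s\<bar> \<le> 1)" if a: "\<alpha> > 0" for \<alpha> :: real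
  proof (intro conjI allI impI)
  have pw: "\<alpha> powr (1/2 * \<nu>) = sqrt \<alpha> powr \<nu>"
  proof -
    have "sqrt \<alpha> = \<alpha> powr (1/2)" using a by (simp add: powr_half_sqrt)
    then show ?thesis by (simp only: powr_powr)
  qed
  show "\<bar>filt \<alpha> s / s\<bar> \<le> 1 * \<alpha> powr (- (1/2))" if "s > 0" for s
  proof -
    have "\<bar>filt \<alpha> s / s\<bar> \<le> 1 / (2 * sqrt \<alpha>)" by (rule c_bound[OF that a])
    also have "\<dots> \<le> 1 / sqrt \<alpha>" using a by (simp add: frac_le)
    also have "\<dots> = 1 * \<alpha> powr (- (1/2))"
      using a by (simp only: powr_minus_divide powr_half_sqrt less_imp_le mult_1)
    finally show ?thesis .
  qed
  have bnd: "\<bar>1 - filt \<alpha> s\<bar> * s powr \<nu> \<le> 2 powr \<nu> * \<alpha> powr (1/2 * \<nu>)" if "s > 0" for s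
  proof (cases "s \<ge> 2 * sqrt \<alpha>")
    case True
    then show ?thesis using a by (simp add: filt_def)
  next
    case False
    have "\<bar>1 - filt \<alpha> s\<bar> \<le> 1" using False that a by (simp add: filt_def)
    moreover have "s powr \<nu> \<le> (2 * sqrt \<alpha>) powr \<nu>"
      using False that assms by (intro powr_mono2) auto
    ultimately have "\<bar>1 - filt \<alpha> s\<bar> * s powr \<nu> \<le> 1 * (2 * sqrt \<alpha>) powr \<nu>"
      by (intro mult_mono) auto
    also have "\<dots> = 2 powr \<nu> * \<alpha> powr (1/2 * \<nu>)"
      using pw a by (simp add: powr_mult)
    finally show ?thesis .
  qed
  show "bdd_above ((\<lambda>s. \<bar>1 - filt \<alpha> s\<bar> * s powr \<nu>) ` {0<..})"
    using bnd by (intro bdd_aboveI2[where M="2 powr \<nu> * \<alpha> powr (1/2 * \<nu>)"]) auto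
  have "(SUP s\<in>{0<..}. \<bar>1 - filt \<alpha> s\<bar> * s powr \<nu>) \<le> 2 powr \<nu> * \<alpha> powr (1/2 * \<nu>)"
    using bnd by (intro cSUP_least) auto
  also have "\<dots> < (2 powr \<nu> + 1) * \<alpha> powr (1/2 * \<nu>)"
    using a by (simp add: distrib_right)
  finally show "(SUP s\<in>{0<..}. \<bar>1 - filt \<alpha> s\<bar> * s powr \<nu>) < (2 powr \<nu> + 1) * \<alpha> powr (1/2 * \<nu>)" .
  show "\<bar>filt \<alpha> s\<bar> \<le> 1" if "s > 0" for s
    using that a by (simp add: filt_def)
qed
  have "0 < (2::real) powr \<nu>" by simp
  then have p: "0 < (1/2::real)" "0 < (1::real)" "0 < 2 powr \<nu> + (1::real)" by linarith+
  show ?thesis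
    apply (rule exI[of _ "1/2"], rule conjI[OF p(1)])
    apply (rule exI[of _ 1], rule conjI[OF p(2)])
    apply (rule exI[of _ "2 powr \<nu> + 1"], rule conjI[OF p(3)])
    apply (rule exI[of _ 1], rule conjI[OF p(2)])
    apply (intro allI impI) by (rule main)
qed

lemma part1:
  fixes A :: "'a::{real_inner, complete_space} \<Rightarrow> 'b::{real_inner, complete_space}"
    and I :: "'i set" and \<sigma> :: "'i \<Rightarrow> real" and u :: "'i \<Rightarrow> 'a" and v :: "'i \<Rightarrow> 'b"
  assumes cA: "compact_operator A"
    and ss: "singular_system A I \<sigma> u v"
    and a: "\<alpha> > 0"
  shows "((\<lambda>i. (filt \<alpha> (\<sigma> i) / \<sigma> i * inner y (v i)) *\<^sub>R u i) has_sum K_op I \<sigma> u v \<alpha> y) I"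
proof -
  have bl: "bounded_linear A" using cA by (simp add: compact_operator_def)
  obtain K where K: "\<And>x. norm (A x) \<le> norm x * K"
    using bounded_linear.bounded[OF bl] by blast
  have spos: "\<And>i. i \<in> I \<Longrightarrow> \<sigma> i > 0" using ss by (simp add: singular_system_def)
  have ou: "orthon u I" and ov: "orthon v I"
    using ss by (simp_all add: singular_system_def orthon_def)
  have Au: "\<And>i. i \<in> I \<Longrightarrow> A (u i) = \<sigma> i *\<^sub>R v i" using ss by (simp add: singular_system_def)
  have sK: "\<sigma> i \<le> K" if i: "i \<in> I" for i
  proof -
    have nu: "norm (u i) = 1" using ou i unfolding orthon_def by (simp add: norm_eq_sqrt_inner)
    have nv: "norm (v i) = 1" using ov i unfolding orthon_def by (simp add: norm_eq_sqrt_inner)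
    have "norm (A (u i)) = \<sigma> i" using Au[OF i] nv spos[OF i] by simp
    then show ?thesis using K[of "u i"] nu by simp
  qed
  define \<beta> where "\<beta> i = beta \<alpha> (\<sigma> i)" for i
  define c where "c i = filt \<alpha> (\<sigma> i) / \<sigma> i" for i
  define B where "B = B_op I \<sigma> u v \<alpha>"
  have \<beta>b: "\<bar>\<beta> i\<bar> \<le> K + sqrt \<alpha>" if "i \<in> I" for i
    using beta_bound[OF spos[OF that] a] sK[OF that] unfolding \<beta>_def by linarith
  have cb: "\<bar>c i\<bar> \<le> 1 / (2 * sqrt \<alpha>)" if "i \<in> I" for i
    using c_bound[OF spos[OF that] a] unfolding c_def by simp
  have hB: "((\<lambda>i. (\<beta> i * inner (u i) x) *\<^sub>R v i) has_sum B x) I" for x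
  proof -
    have "(\<lambda>i. (\<beta> i * inner (u i) x) *\<^sub>R v i) summable_on I"
      by (rule orth_summable[OF ov sq_summable[OF ou \<beta>b]])
    then show ?thesis unfolding B_def B_op_def \<beta>_def by (simp add: has_sum_infsum)
  qed
  define xs where "xs = infsum (\<lambda>i. (c i * inner y (v i)) *\<^sub>R u i) I"
  have hx: "((\<lambda>i. (c i * inner y (v i)) *\<^sub>R u i) has_sum xs) I"
  proof -
    have "(\<lambda>i. (c i * inner (v i) y)\<^sup>2) summable_on I" by (rule sq_summable[OF ov cb])
    then have "(\<lambda>i. (c i * inner y (v i))\<^sup>2) summable_on I" by (simp add: inner_commute)
    then have "(\<lambda>i. (c i * inner y (v i)) *\<^sub>R u i) summable_on I"
      by (rule orth_summable[OF ou])
    then show ?thesis unfolding xs_def by (simp add: has_sum_infsum)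
  qed
  have coefx: "inner (u i) xs = c i * inner y (v i)" if "i \<in> I" for i
    by (rule orth_coef[OF ou hx that])
  have coefB: "inner (v i) (B x) = \<beta> i * inner (u i) x" if "i \<in> I" for i x
    by (rule orth_coef[OF ov hB that])
  have foc: "inner (B xs - y) (B z) + \<alpha> * inner xs z = 0" for z
  proof -
    have h1: "((\<lambda>i. inner (B xs - y) ((\<beta> i * inner (u i) z) *\<^sub>R v i)) has_sum inner (B xs - y) (B z)) I"
      by (rule has_sum_bounded_linear[OF bounded_linear_inner_right hB])
    have h2: "((\<lambda>i. inner ((c i * inner y (v i)) *\<^sub>R u i) z) has_sum inner xs z) I"
      by (rule has_sum_bounded_linear[OF bounded_linear_inner_left hx])
    note h3 = has_sum_cmult_right[OF h2, where c=\<alpha>]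
    note h4 = has_sum_add[OF h1 h3]
    have "((\<lambda>i. inner (B xs - y) ((\<beta> i * inner (u i) z) *\<^sub>R v i)
             + \<alpha> * inner ((c i * inner y (v i)) *\<^sub>R u i) z) has_sum 0) I"
    proof -
      have "inner (B xs - y) ((\<beta> i * inner (u i) z) *\<^sub>R v i)
             + \<alpha> * inner ((c i * inner y (v i)) *\<^sub>R u i) z = 0" if i: "i \<in> I" for i
      proof -
        have e1: "inner (B xs - y) (v i) = \<beta> i * (c i * inner y (v i)) - inner y (v i)"
          using coefB[OF i, of xs] coefx[OF i] inner_diff_left[of "B xs" y "v i"] inner_commute[of "B xs" "v i"]
          by simp
        have e2: "c i * ((\<beta> i)\<^sup>2 + \<alpha>) = \<beta> i"
          using beta_id[OF spos[OF i] a] unfolding c_def \<beta>_def .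
        have "inner (B xs - y) ((\<beta> i * inner (u i) z) *\<^sub>R v i)
             + \<alpha> * inner ((c i * inner y (v i)) *\<^sub>R u i) z
             = inner (u i) z * inner y (v i) * (c i * ((\<beta> i)\<^sup>2 + \<alpha>) - \<beta> i)"
          by (simp only: inner_scaleR_right inner_scaleR_left e1) (simp add: algebra_simps power2_eq_square)
        then show ?thesis using e2 by simp
      qed
      then show ?thesis by (subst has_sum_cong[where g="\<lambda>_. 0"]) auto
    qed
    from has_sum_unique[OF h4 this] show ?thesis .
  qed
  define J where "J x = (norm (B x - y))\<^sup>2 / 2 + \<alpha> / 2 * (norm x)\<^sup>2" for x
  have Jid: "J z = J xs + (norm (B z - B xs))\<^sup>2 / 2 + \<alpha> / 2 * (norm (z - xs))\<^sup>2" for z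
  proof -
    define t1 where "t1 = inner (B xs - y) (B z - B xs)"
    define t2 where "t2 = inner xs (z - xs)"
    have f: "t1 + \<alpha> * t2 = 0"
      using foc[of z] foc[of xs] unfolding t1_def t2_def by (simp add: inner_diff_right algebra_simps)
    have n1: "(norm (B z - y))\<^sup>2 = (norm (B xs - y))\<^sup>2 + 2 * t1 + (norm (B z - B xs))\<^sup>2"
      using norm_add_sq[of "B xs - y" "B z - B xs"] unfolding t1_def by simp
    have n2: "(norm z)\<^sup>2 = (norm xs)\<^sup>2 + 2 * t2 + (norm (z - xs))\<^sup>2"
      using norm_add_sq[of xs "z - xs"] unfolding t2_def by simp
    have "J z = J xs + (norm (B z - B xs))\<^sup>2 / 2 + \<alpha> / 2 * (norm (z - xs))\<^sup>2 + (t1 + \<alpha> * t2)"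
      unfolding J_def n1 n2 by (simp add: algebra_simps)
    then show ?thesis using f by simp
  qed
  have "K_op I \<sigma> u v \<alpha> y = xs"
    unfolding K_op_def tik_min_def B_def[symmetric] J_def[symmetric]
  proof (rule the_equality)
    show "\<forall>z. J xs \<le> J z"
    proof
      fix z
      have "0 \<le> \<alpha> / 2 * (norm (z - xs))\<^sup>2" using a by simp
      moreover have "0 \<le> (norm (B z - B xs))\<^sup>2 / 2" by simp
      ultimately show "J xs \<le> J z" using Jid[of z] by linarith
    qed
  next
    fix x assume "\<forall>z. J x \<le> J z"
    then have "J x \<le> J xs" by blast
    moreover have "0 \<le> (norm (B x - B xs))\<^sup>2 / 2" by simp
    ultimately have "\<alpha> / 2 * (norm (x - xs))\<^sup>2 \<le> 0" using Jid[of x] by linarith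
    then have "(norm (x - xs))\<^sup>2 \<le> 0" using a by (simp add: mult_le_0_iff)
    then show "x = xs" by simp
  qed
  then show ?thesis using hx unfolding c_def by simp
qed

theorem theorem2:
  fixes A :: "'a::{real_inner, complete_space} \<Rightarrow> 'b::{real_inner, complete_space}"
    and I :: "'i set" and \<sigma> :: "'i \<Rightarrow> real" and u :: "'i \<Rightarrow> 'a" and v :: "'i \<Rightarrow> 'b"
  assumes "compact_operator A"
    and "singular_system A I \<sigma> u v"
  shows "(\<forall>\<alpha>>0. \<forall>y. ((\<lambda>i. (filt \<alpha> (\<sigma> i) / \<sigma> i * inner y (v i)) *\<^sub>R u i)
                          has_sum K_op I \<sigma> u v \<alpha> y) I)
       \<and> (\<forall>\<nu>>0. \<exists>\<gamma>>0. \<exists>c1>0. \<exists>c2>0. \<exists>c3>0. \<forall>\<alpha>>0.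
            (\<forall>s>0. \<bar>filt \<alpha> s / s\<bar> \<le> c1 * \<alpha> powr (- \<gamma>))
          \<and> bdd_above ((\<lambda>s. \<bar>1 - filt \<alpha> s\<bar> * s powr \<nu>) ` {0<..})
          \<and> (SUP s\<in>{0<..}. \<bar>1 - filt \<alpha> s\<bar> * s powr \<nu>) < c2 * \<alpha> powr (\<gamma> * \<nu>)
          \<and> (\<forall>s>0. \<bar>filt \<alpha> s\<bar> \<le> c3))"
  using part1[OF assms] filt_props by blast

end
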